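(* Let $m\ge1$ and let $A=\{a_1,\dots,a_m\}$, $B=\{b_1,\dots,b_m\}$ be sets of integers with $1\le a_1<\dots<a_m$ and $1\le b_1<\dots<b_m$. Define $\ell(A,B)$ to be the largest integer $\ell\ge0$ for which there exist indices $1\le i_1<i_2<\dots<i_\ell\le m$ with $a_1<b_{i_1},\ a_2<b_{i_2},\ \dots,\ a_\ell<b_{i_\ell}$. Let $b'$ be an integer with $b'>a_m$ and $b'>b_m$, and let $B'=\{b_2,\dots,b_m,b'\}$. If $\ell(A,B)<m$, then $\ell(A,B')=\ell(A,B)+1$. *)

theory Defs
  imports Main
begin

text \<open>A set \<open>{a_1 < ... < a_m}\<close> is represented by its increasing enumeration
  \<open>a :: nat \<Rightarrow> int\<close> on the index set \<open>{1..m}\<close>.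
  \<open>ell m a b\<close> is the largest \<open>l\<close> such that there are indices
  \<open>1 \<le> i_1 < ... < i_l \<le> m\<close> with \<open>a_k < b_{i_k}\<close> for \<open>k = 1..l\<close>.
  (The bound \<open>l \<le> m\<close> is automatic, since the indices are distinct elements of \<open>{1..m}\<close>;
  it is stated only to make the maximum obviously well defined.)\<close>

definition ell_admissible :: "nat \<Rightarrow> (nat \<Rightarrow> int) \<Rightarrow> (nat \<Rightarrow> int) \<Rightarrow> nat \<Rightarrow> bool" where
  "ell_admissible m a b l \<longleftrightarrow>
     (\<exists>i :: nat \<Rightarrow> nat. strict_mono_on {1..l} i \<and> i ` {1..l} \<subseteq> {1..m} \<and>
        (\<forall>k\<in>{1..l}. a k < b (i k)))"

definition ell :: "nat \<Rightarrow> (nat \<Rightarrow> int) \<Rightarrow> (nat \<Rightarrow> int) \<Rightarrow> nat" where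
  "ell m a b = Max {l. l \<le> m \<and> ell_admissible m a b l}"

end

theory Submission
  imports Defs
begin

lemma adm0: "ell_admissible m a b 0"
  unfolding ell_admissible_def by (auto simp: strict_mono_on_def)

lemma ell_props:
  "ell m a b \<le> m \<and> ell_admissible m a b (ell m a b)"
proof -
  have fin: "finite {l. l \<le> m \<and> ell_admissible m a b l}" by auto
  have ne: "0 \<in> {l. l \<le> m \<and> ell_admissible m a b l}" using adm0 by auto
  show ?thesis using Max_in[OF fin] ne unfolding ell_def by blast
qed

lemma ell_ge: "l \<le> m \<Longrightarrow> ell_admissible m a b l \<Longrightarrow> l \<le> ell m a b"
  unfolding ell_def by (rule Max_ge) auto

lemma down:
  assumes "ell_admissible m a (\<lambda>k. if k < m then b (k + 1) else b') l" "l \<ge> 1"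
  shows "ell_admissible m a b (l - 1)"
proof -
  obtain i where sm: "strict_mono_on {1..l} i" and rg: "i ` {1..l} \<subseteq> {1..m}"
    and v: "\<forall>k\<in>{1..l}. a k < (if i k < m then b (i k + 1) else b')"
    using assms(1) unfolding ell_admissible_def by blast
  have lt: "i k < m" if "k \<in> {1..l-1}" for k
  proof -
    have "i k < i l" using that assms(2) by (intro strict_mono_onD[OF sm]) auto
    moreover have "i l \<in> i ` {1..l}" using assms(2) by auto
    hence "i l \<le> m" using rg by auto
    ultimately show ?thesis by simp
  qed
  show ?thesis unfolding ell_admissible_def
  proof (intro exI[of _ "\<lambda>k. i k + 1"] conjI)
    show "strict_mono_on {1..l - 1} (\<lambda>k. i k + 1)"
    proof (rule strict_mono_onI)
      fix r s assume "r \<in> {1..l-1}" "s \<in> {1..l-1}" "r < s"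
      thus "i r + 1 < i s + 1" by (auto intro: strict_mono_onD[OF sm])
    qed
    show "(\<lambda>k. i k + 1) ` {1..l - 1} \<subseteq> {1..m}" using lt by (auto simp: Suc_le_eq)
    show "\<forall>k\<in>{1..l - 1}. a k < b (i k + 1)"
    proof
      fix k assume k: "k \<in> {1..l-1}"
      hence "k \<in> {1..l}" by auto
      hence "a k < (if i k < m then b (i k + 1) else b')" using v by blast
      thus "a k < b (i k + 1)" using lt[OF k] by simp
    qed
  qed
qed

lemma up:
  assumes "ell_admissible m a b L" "L < m"
    and am: "strict_mono_on {1..m} a" and bm: "strict_mono_on {1..m} b"
    and "b' > a m"
  shows "ell_admissible m a (\<lambda>k. if k < m then b (k + 1) else b') (L + 1)"
proof -
  obtain i where sm: "strict_mono_on {1..L} i" and rg: "i ` {1..L} \<subseteq> {1..m}"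
    and v: "\<forall>k\<in>{1..L}. a k < b (i k)"
    using assms(1) unfolding ell_admissible_def by blast
  have "card (i ` {1..L}) \<le> L" using card_image_le[of "{1..L}" i] by simp
  have "\<not> {1..m} \<subseteq> i ` {1..L}"
  proof
    assume "{1..m} \<subseteq> i ` {1..L}"
    hence "card {1..m} \<le> card (i ` {1..L})" by (intro card_mono) auto
    thus False using \<open>card (i ` {1..L}) \<le> L\<close> assms(2) by simp
  qed
  then obtain j where j: "j \<in> {1..m}" "j \<notin> i ` {1..L}" by blast
  define i' where "i' k = (if k \<le> L then (if i k < j then i k else i k - 1) else m)" for k
  have gt: "i k > j" if "k \<in> {1..L}" "\<not> i k < j" for k
    using j that by (metis image_eqI nat_neq_iff)
  show ?thesis unfolding ell_admissible_def
  proof (intro exI[of _ i'] conjI)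
    show "strict_mono_on {1..L + 1} i'"
    proof (rule strict_mono_onI)
      fix r s assume r: "r \<in> {1..L+1}" and s: "s \<in> {1..L+1}" and rs: "r < s"
      show "i' r < i' s"
      proof (cases "s \<le> L")
        case True
        hence "i r < i s" using sm r s rs unfolding strict_mono_on_def by auto
        thus ?thesis using True rs gt[of r] gt[of s] r s unfolding i'_def by auto
      next
        case False
        have "r \<le> L" using False rs s by auto
        moreover have "i r \<in> i ` {1..L}" using r \<open>r \<le> L\<close> by auto
        hence "i r \<le> m" using rg by auto
        ultimately show ?thesis using False j gt[of r] r unfolding i'_def by auto
      qed
    qed
    show "i' ` {1..L + 1} \<subseteq> {1..m}"
    proof
      fix x assume "x \<in> i' ` {1..L + 1}"
      then obtain k where k: "k \<in> {1..L+1}" "x = i' k" by blast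
      show "x \<in> {1..m}"
      proof (cases "k \<le> L")
        case True
        hence "i k \<in> i ` {1..L}" using k by auto
        hence "i k \<in> {1..m}" using rg by blast
        thus ?thesis using True k gt[of k] j unfolding i'_def by auto
      next
        case False thus ?thesis using k assms(2) unfolding i'_def by auto
      qed
    qed
    show "\<forall>k\<in>{1..L + 1}. a k < (if i' k < m then b (i' k + 1) else b')"
    proof
      fix k assume k: "k \<in> {1..L+1}"
      show "a k < (if i' k < m then b (i' k + 1) else b')"
      proof (cases "k \<le> L")
        case True
        have "i k \<in> i ` {1..L}" using k True by auto
        hence ik: "i k \<in> {1..m}" using rg by blast
        have ak: "a k < b (i k)" using v k True by auto
        show ?thesis
        proof (cases "i k < j")
          case True
          hence "i k < m" using j by auto
          hence "b (i k) < b (i k + 1)" using bm ik unfolding strict_mono_on_def by auto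
          thus ?thesis using \<open>k \<le> L\<close> True ak \<open>i k < m\<close> unfolding i'_def by auto
        next
          case False
          hence "i k > j" using gt k \<open>k \<le> L\<close> by auto
          hence "i k - 1 < m" "i k - 1 + 1 = i k" using ik by auto
          thus ?thesis using \<open>k \<le> L\<close> False ak unfolding i'_def by auto
        qed
      next
        case False
        hence "k = L + 1" using k by auto
        hence "a k \<le> a m" using am assms(2)
          unfolding strict_mono_on_def by (cases "k = m") (auto simp: less_imp_le)
        thus ?thesis using False assms(5) unfolding i'_def by auto
      qed
    qed
  qed
qed

theorem lemma5p11:
  fixes m :: nat and a b :: "nat \<Rightarrow> int" and b' :: int
  assumes "m \<ge> 1"
    and "strict_mono_on {1..m} a" and "1 \<le> a 1"
    and "strict_mono_on {1..m} b" and "1 \<le> b 1"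
    and "b' > a m" and "b' > b m"
    and "ell m a b < m"
  shows "ell m a (\<lambda>k. if k < m then b (k + 1) else b') = ell m a b + 1"
proof -
  let ?B = "\<lambda>k. if k < m then b (k + 1) else b'"
  have A: "ell_admissible m a b (ell m a b)" using ell_props by blast
  have ge: "ell m a b + 1 \<le> ell m a ?B"
    by (rule ell_ge) (use assms(8) up[OF A assms(8) assms(2) assms(4) assms(6)] in auto)
  have P: "ell_admissible m a ?B (ell m a ?B)" using ell_props by blast
  have "ell m a ?B - 1 \<le> ell m a b"
    using ell_ge[OF _ down[OF P]] ge ell_props[of m a ?B] by auto
  thus ?thesis using ge by auto
qed

end
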